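(* Let $A\in\mathfrak g$ have characteristic polynomial equal to a power of an irreducible polynomial. Unless $\mathfrak g=\mathfrak o$ and the characteristic polynomial of $A$ is $x^n$, one has $Q_A\subseteq R_A$. In the remaining case ($\mathfrak g=\mathfrak o$, characteristic polynomial $x^n$), every $v\in Q_A$ still satisfies $\langle A^kv,v\rangle=0$ for all $k\ge1$.
   Context: $\mathbb{K}=\mathbb{F}$ or a quadratic extension of a field $\mathbb{F}$ of characteristic $\neq2$; $V$ an $n$-dimensional $\mathbb{K}$-space with a non-degenerate form which is symmetric ($\mathfrak g=\mathfrak o$), Hermitian ($\mathfrak g=\mathfrak u$) or symplectic ($\mathfrak g=\mathfrak{sp}$); $\mathfrak g=\{A:A^*=-A\}$. $\phi_v$ denotes $u\mapsto\langle u,v\rangle v$. For $A\in\mathfrak g$: $R_A=\{v\in V:\langle A^kv,v\rangle=0\ \forall k\ge0\}$; in the cases $\mathfrak u,\mathfrak{sp}$, $Q_A=\{v\in V:\phi_v\in[A,\mathfrak g]\}$, and in the case $\mathfrak o$, $Q_A=\{v\in V: A\phi_v+\phi_vA\in[A,\mathfrak g]\}$, where $[A,\mathfrak g]=\{AB-BA:B\in\mathfrak g\}$. *)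

theory Defs
  imports "HOL-Analysis.Analysis" "HOL-Computational_Algebra.Polynomial"
begin

(* V = K^n (K = 'a :: field, n = CARD('n)); endomorphisms of V are n x n matrices.
   sigma is the involution of K (identity when K = F; the nontrivial automorphism of the
   quadratic extension K/F in the unitary case, F being its fixed field). *)

datatype form_class = Orth | Unit | Symp

definition field_involution :: "('a::field \<Rightarrow> 'a) \<Rightarrow> bool" where
  "field_involution \<sigma> \<longleftrightarrow>
     (\<forall>x y. \<sigma> (x + y) = \<sigma> x + \<sigma> y) \<and> (\<forall>x y. \<sigma> (x * y) = \<sigma> x * \<sigma> y) \<and>
     (\<forall>x. \<sigma> (\<sigma> x) = x)"

(* sesquilinear (linear in the first, sigma-semilinear in the second argument),
   non-degenerate form of the given class *)
definition good_form :: "form_class \<Rightarrow> ('a::field \<Rightarrow> 'a) \<Rightarrow> ('a^'n \<Rightarrow> 'a^'n \<Rightarrow> 'a) \<Rightarrow> bool" where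
  "good_form c \<sigma> B \<longleftrightarrow>
     field_involution \<sigma> \<and>
     (\<forall>u w v. B (u + w) v = B u v + B w v) \<and>
     (\<forall>a u v. B (a *s u) v = a * B u v) \<and>
     (\<forall>u v w. B u (v + w) = B u v + B u w) \<and>
     (\<forall>a u v. B u (a *s v) = \<sigma> a * B u v) \<and>
     (\<forall>v. (\<forall>u. B u v = 0) \<longrightarrow> v = 0) \<and>
     (case c of
        Orth \<Rightarrow> \<sigma> = id \<and> (\<forall>u v. B v u = B u v)
      | Unit \<Rightarrow> \<sigma> \<noteq> id \<and> (\<forall>u v. B v u = \<sigma> (B u v))
      | Symp \<Rightarrow> \<sigma> = id \<and> (\<forall>u v. B v u = - B u v))"

(* g = {A : A^* = -A}, i.e. <Au,v> = -<u,Av> for all u v *)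
definition lie_alg :: "('a::field^'n \<Rightarrow> 'a^'n \<Rightarrow> 'a) \<Rightarrow> ('a^'n^'n) set" where
  "lie_alg B = {A. \<forall>u v. B (A *v u) v = - B u (A *v v)}"

(* [A, g] *)
definition comm_set :: "('a::field^'n \<Rightarrow> 'a^'n \<Rightarrow> 'a) \<Rightarrow> 'a^'n^'n \<Rightarrow> ('a^'n^'n) set" where
  "comm_set B A = {A ** C - C ** A | C. C \<in> lie_alg B}"

(* matrix of phi_v : u \<mapsto> <u,v> v *)
definition phi :: "('a::field^'n \<Rightarrow> 'a^'n \<Rightarrow> 'a) \<Rightarrow> 'a^'n \<Rightarrow> 'a^'n^'n" where
  "phi B v = (\<chi> i j. B (axis j 1) v * v $ i)"

definition R_set :: "('a::field^'n \<Rightarrow> 'a^'n \<Rightarrow> 'a) \<Rightarrow> 'a^'n^'n \<Rightarrow> ('a^'n) set" where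
  "R_set B A = {v. \<forall>k::nat. B (((*v) A ^^ k) v) v = 0}"

definition Q_set :: "form_class \<Rightarrow> ('a::field^'n \<Rightarrow> 'a^'n \<Rightarrow> 'a) \<Rightarrow> 'a^'n^'n \<Rightarrow> ('a^'n) set" where
  "Q_set c B A =
     (if c = Orth then {v. A ** phi B v + phi B v ** A \<in> comm_set B A}
      else {v. phi B v \<in> comm_set B A})"

definition charpoly :: "'a::field^'n^'n \<Rightarrow> 'a poly" where
  "charpoly A = det (mat [:0, 1:] - (\<chi> i j. [:A $ i $ j:]))"

end

theory Submission imports Defs "HOL-Computational_Algebra.Polynomial_Factorial" begin


lemma cp_entry: "(mat [:0, 1:] - (\<chi> i j. [:(A::'a::field^'n^'n) $ i $ j:])) $ i $ j
   = [: - A$i$j, (if i = j then 1 else 0) :]"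
  by (simp add: mat_def)

lemma cp_entry_deg: "degree ((mat [:0, 1:] - (\<chi> i j. [:(A::'a::field^'n^'n) $ i $ j:])) $ i $ j)
   \<le> (if i = j then 1 else 0)"
  unfolding cp_entry by auto

lemma fix_sum_lt: "p (k::'n::finite) \<noteq> k \<Longrightarrow> (\<Sum>i\<in>(UNIV::'n set). if i = p i then 1 else 0) < (\<Sum>i\<in>(UNIV::'n set). (1::nat))"
  apply (rule sum_strict_mono_ex1)
  apply auto
  by metis

lemma charpoly_coeff_n: "coeff (charpoly (A::'a::field^'n^'n)) CARD('n) = 1"
proof -
  let ?M = "mat [:0, 1:] - (\<chi> i j. [:A $ i $ j:])"
  let ?P = "{p. p permutes (UNIV::'n set)}"
  let ?t = "\<lambda>p. of_int (sign p) * prod (\<lambda>i. ?M$i$p i) (UNIV :: 'n set)"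
  have fin: "finite ?P" by (simp add: finite_permutations)
  have idP: "id \<in> ?P" by (simp add: permutes_id)
  have other: "coeff (?t p) CARD('n) = 0" if "p \<in> ?P - {id}" for p
  proof -
    from that obtain k where k: "p k \<noteq> k" by (auto simp: fun_eq_iff)
    have "degree (?t p) \<le> degree (prod (\<lambda>i. ?M$i$p i) UNIV)"
      using degree_mult_le[of "of_int (sign p)" "prod (\<lambda>i. ?M$i$p i) UNIV"] by simp
    also have "\<dots> \<le> sum (degree \<circ> (\<lambda>i. ?M$i$p i)) UNIV"
      by (rule degree_prod_sum_le) simp
    also have "\<dots> \<le> sum (\<lambda>i. if i = p i then 1 else 0) UNIV"
      by (rule sum_mono) (simp only: cp_entry, auto)
    also have "\<dots> < sum (\<lambda>i. 1::nat) (UNIV::'n set)"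
      using fix_sum_lt[of p k] k by simp
    finally have "degree (?t p) < CARD('n)" by simp
    then show ?thesis by (simp add: coeff_eq_0)
  qed
  have idt: "coeff (?t id) CARD('n) = 1"
  proof -
    have ne: "\<forall>i\<in>UNIV. ?M$i$id i \<noteq> 0" by (simp only: cp_entry) simp
    have d: "degree (prod (\<lambda>i. ?M$i$id i) UNIV) = CARD('n)"
      using degree_prod_eq_sum_degree[OF ne] by (simp only: cp_entry) simp
    have l: "lead_coeff (prod (\<lambda>i. ?M$i$id i) UNIV) = 1"
      by (simp only: lead_coeff_prod cp_entry) simp
    show ?thesis using d l by (simp add: sign_id)
  qed
  have "coeff (charpoly A) CARD('n) = (\<Sum>p\<in>?P. coeff (?t p) CARD('n))"
    by (simp add: charpoly_def det_def coeff_sum)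
  also have "\<dots> = coeff (?t id) CARD('n) + (\<Sum>p\<in>?P - {id}. coeff (?t p) CARD('n))"
    by (rule sum.remove[OF fin idP])
  also have "\<dots> = 1" using other idt by simp
  finally show ?thesis .
qed

lemma charpoly_at0: "poly (charpoly (A::'a::field^'n^'n)) 0 = det (- A)"
  unfolding charpoly_def det_def cp_entry by (simp add: poly_sum poly_prod of_int_poly)

lemma det_neg_zero: "det (A::'a::field^'n^'n) = 0 \<Longrightarrow> det (- A) = 0"
proof -
  assume "det A = 0"
  have "- A = A ** mat (-1)" by (simp add: vec_eq_iff matrix_matrix_mult_def mat_def if_distrib cong: if_cong)
  thus ?thesis using \<open>det A = 0\<close> by (simp add: det_mul)
qed

lemma charpoly_x:
  assumes irr: "\<exists>p k. irreducible p \<and> charpoly (A::'a::field^'n^'n) = p ^ k"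
    and d: "det A = 0"
  shows "charpoly A = [:0, 1:] ^ CARD('n)"
proof -
  obtain p k where p: "irreducible p" and pk: "charpoly A = p ^ k" using irr by blast
  have "poly (charpoly A) 0 = 0" by (subst charpoly_at0) (rule det_neg_zero[OF d])
  hence "[:0,1:] dvd p ^ k" using pk by (simp add: dvd_iff_poly_eq_0)
  moreover have pr: "prime_elem ([:0,1:] :: 'a poly)"
    using prime_elem_linear_field_poly[of 1 0] by simp
  ultimately have "[:0,1:] dvd p" using prime_elem_dvd_power by blast
  then obtain q where q: "p = [:0,1:] * q" by blast
  have "is_unit q" using p q irreducibleD[of p "[:0,1:]" q] pr
    by (metis prime_elem_def)
  then obtain d where d0: "d \<noteq> 0" and qd: "q = [:d:]"
    using is_unit_poly_iff[of q] by (metis dvd_0_left_iff one_neq_zero)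
  have cp: "charpoly A = smult (d^k) ([:0,1:]^k)"
    using pk q qd smult_power[of d "[:0,1:]" k] by simp
  have "coeff (charpoly A) CARD('n) = 1" by (rule charpoly_coeff_n)
  have cp2: "charpoly A = monom (d^k) k" using cp by (simp add: monom_altdef)
  have "k = CARD('n) \<and> d^k = 1"
    using \<open>coeff (charpoly A) CARD('n) = 1\<close> unfolding cp2 by (auto split: if_splits)
  thus ?thesis using cp by (metis smult_1_left)
qed


lemma B_sum_left:
  fixes B :: "'v::comm_monoid_add \<Rightarrow> 'w \<Rightarrow> 'c::ab_group_add"
  assumes add: "\<forall>u w v. B (u + w) v = B u v + B w v"
  shows "finite S \<Longrightarrow> B (\<Sum>j\<in>S. f j) v = (\<Sum>j\<in>S. B (f j) v)"
proof (induction S rule: finite_induct)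
  case empty
  have "B 0 v = B 0 v + B 0 v" using add by (metis add_0)
  then show ?case using add_cancel_right_right[of "B 0 v" "B 0 v"] by simp
next
  case (insert x F) then show ?case by (simp add: add)
qed

lemma trace_phi:
  fixes B :: "'a::field^'n \<Rightarrow> 'a^'n \<Rightarrow> 'a"
  assumes add: "\<forall>u w v. B (u + w) v = B u v + B w v"
    and hom: "\<forall>a u v. B (a *s u) v = a * B u v"
  shows "trace (phi B v ** X) = B (X *v v) v"
proof -
  have "B (X *v v) v = B (\<Sum>j\<in>UNIV. (X *v v)$j *s axis j 1) v"
    by (simp add: basis_expansion)
  also have "\<dots> = (\<Sum>j\<in>UNIV. (X *v v)$j * B (axis j 1) v)"
    by (simp add: B_sum_left[OF add] hom)
  also have "\<dots> = (\<Sum>j\<in>UNIV. \<Sum>i\<in>UNIV. X$j$i * v$i * B (axis j 1) v)"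
    by (simp add: matrix_vector_mult_def sum_distrib_right)
  also have "\<dots> = (\<Sum>i\<in>UNIV. \<Sum>j\<in>UNIV. B (axis j 1) v * v$i * X$j$i)"
    by (subst sum.swap) (simp add: mult_ac)
  also have "\<dots> = trace (phi B v ** X)"
    by (simp add: trace_def phi_def matrix_matrix_mult_def)
  finally show ?thesis by simp
qed

lemma mat_sub_rdistrib: "((P::'a::field^'n^'m) - Q) ** X = P ** X - Q ** X"
  by (simp add: vec_eq_iff matrix_matrix_mult_def left_diff_distrib sum_subtractf)

lemma comm_trace:
  fixes A X M :: "'a::field^'n^'n"
  assumes M: "M \<in> comm_set B A" and AX: "A ** X = X ** A"
  shows "trace (M ** X) = 0"
proof -
  obtain C where MC: "M = A ** C - C ** A" using M unfolding comm_set_def by blast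
  have "(A ** C - C ** A) ** X = A ** (C ** X) - C ** (A ** X)"
    by (simp only: mat_sub_rdistrib matrix_mul_assoc)
  then have 1: "trace (M ** X) = trace (A ** (C ** X)) - trace (C ** (A ** X))"
    by (simp only: MC trace_sub)
  have 2: "trace (A ** (C ** X)) = trace ((C ** X) ** A)" by (rule trace_mul_sym)
  have 3: "(C ** X) ** A = C ** (A ** X)" by (simp only: AX matrix_mul_assoc)
  show ?thesis using 1 2 3 by simp
qed

fun mpow :: "'a::comm_semiring_1^'n^'n \<Rightarrow> nat \<Rightarrow> 'a^'n^'n" where
  "mpow A 0 = mat 1"
| "mpow A (Suc k) = A ** mpow A k"

lemma mpow_vec: "mpow A k *v v = ((*v) A ^^ k) v"
  by (induction k) (simp_all add: matrix_vector_mul_assoc[symmetric])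

lemma mpow_comm: "A ** mpow A k = mpow A k ** A"
  by (induction k) (simp_all add: matrix_mul_assoc)

lemma mpow_sign:
  fixes A :: "'a::field^'n^'n"
  assumes A: "A \<in> lie_alg B"
  shows "B (mpow A k *v u) v = (-1)^k * B u (mpow A k *v v)"
proof (induction k arbitrary: u v)
  case 0 then show ?case by simp
next
  case (Suc k)
  have "B (mpow A (Suc k) *v u) v = B (A *v (mpow A k *v u)) v"
    by (simp only: mpow.simps matrix_vector_mul_assoc)
  also have "\<dots> = - B (mpow A k *v u) (A *v v)" using A unfolding lie_alg_def by blast
  also have "\<dots> = - ((-1)^k * B u (mpow A k *v (A *v v)))" by (simp only: Suc.IH)
  also have "mpow A k *v (A *v v) = mpow A (Suc k) *v v"
    by (simp only: mpow.simps matrix_vector_mul_assoc mpow_comm)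
  finally show ?case by simp
qed

lemma mpow_odd_lie:
  fixes A :: "'a::field^'n^'n"
  assumes A: "A \<in> lie_alg B" and "odd k"
  shows "mpow A k \<in> lie_alg B"
  using mpow_sign[OF A] assms(2) by (simp add: lie_alg_def)

definition smat :: "'a::field \<Rightarrow> 'a^'n^'n \<Rightarrow> 'a^'n^'n" where
  "smat \<mu> X = (\<chi> i j. \<mu> * X$i$j)"

lemma smat_vec: "smat \<mu> X *v u = \<mu> *s (X *v u)"
  by (simp add: smat_def vec_eq_iff matrix_vector_mult_def sum_distrib_left mult.assoc)
lemma smat_mul_l: "smat \<mu> X ** Y = smat \<mu> (X ** Y)"
  unfolding smat_def vec_eq_iff matrix_matrix_mult_def
  by (simp add: sum_distrib_left mult.assoc)
lemma smat_mul_r: "Y ** smat \<mu> X = smat \<mu> (Y ** X)"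
  unfolding smat_def vec_eq_iff matrix_matrix_mult_def
  by (simp add: sum_distrib_left mult.left_commute)
lemma smat_comm: "(A::'a::field^'n^'n) ** X = X ** A \<Longrightarrow> A ** smat \<mu> X = smat \<mu> X ** A"
  by (simp add: smat_mul_l smat_mul_r)

lemma two_zero: "(2::'a::field) \<noteq> 0 \<Longrightarrow> x + x = (0::'a) \<Longrightarrow> x = 0"
  by (metis mult_2 no_zero_divisors)


lemma mat_add_rdistrib: "((P::'a::field^'n^'m) + Q) ** X = P ** X + Q ** X"
  by (simp add: vec_eq_iff matrix_matrix_mult_def distrib_right sum.distrib)

lemma orth_trace:
  fixes A X :: "'a::field^'n^'n"
  assumes M: "A ** phi B v + phi B v ** A \<in> comm_set B A"
    and AX: "A ** X = X ** A"
    and tp: "\<And>Y. trace (phi B v ** Y) = B (Y *v v) v"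
  shows "B ((X ** A) *v v) v + B ((X ** A) *v v) v = 0"
proof -
  let ?f = "phi B v"
  have 0: "trace ((A ** ?f + ?f ** A) ** X) = 0" by (rule comm_trace[OF M AX])
  have 1: "trace ((A ** ?f + ?f ** A) ** X) = trace (A ** (?f ** X)) + trace (?f ** (A ** X))"
    by (simp only: mat_add_rdistrib trace_add matrix_mul_assoc)
  have 2: "trace (A ** (?f ** X)) = trace ((?f ** X) ** A)" by (rule trace_mul_sym)
  have 3: "(?f ** X) ** A = ?f ** (X ** A)" by (simp only: matrix_mul_assoc)
  have 4: "?f ** (A ** X) = ?f ** (X ** A)" by (simp only: AX)
  have 5: "trace (A ** (?f ** X)) = B ((X ** A) *v v) v" by (simp only: 2 3 tp)
  have 6: "trace (?f ** (A ** X)) = B ((X ** A) *v v) v" by (simp only: 4 tp)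
  show ?thesis using 0 by (simp only: 1 5 6)
qed

theorem theorem8p3:
  fixes c :: form_class and \<sigma> :: "'a::field \<Rightarrow> 'a"
    and B :: "'a^'n \<Rightarrow> 'a^'n \<Rightarrow> 'a" and A :: "'a^'n^'n"
  assumes char: "(2::'a) \<noteq> 0"
    and form: "good_form c \<sigma> B"
    and A: "A \<in> lie_alg B"
    and irr: "\<exists>p k. irreducible p \<and> charpoly A = p ^ k"
  shows "(\<not> (c = Orth \<and> charpoly A = [:0, 1:] ^ CARD('n)) \<longrightarrow> Q_set c B A \<subseteq> R_set B A)
       \<and> (c = Orth \<and> charpoly A = [:0, 1:] ^ CARD('n) \<longrightarrow>
            (\<forall>v\<in>Q_set c B A. \<forall>k::nat. k \<ge> 1 \<longrightarrow> B (((*v) A ^^ k) v) v = 0))"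
proof -
  have fi: "field_involution \<sigma>" using form unfolding good_form_def by (elim conjE) assumption
  have add: "\<forall>u w v. B (u + w) v = B u v + B w v" using form unfolding good_form_def by (elim conjE) assumption
  have hom: "\<forall>a u v. B (a *s u) v = a * B u v" using form unfolding good_form_def by (elim conjE) assumption
  have hom2: "\<forall>a u v. B u (a *s v) = \<sigma> a * B u v" using form unfolding good_form_def by (elim conjE) assumption
  have cls: "case c of
        Orth \<Rightarrow> \<sigma> = id \<and> (\<forall>u v. B v u = B u v)
      | Unit \<Rightarrow> \<sigma> \<noteq> id \<and> (\<forall>u v. B v u = \<sigma> (B u v))
      | Symp \<Rightarrow> \<sigma> = id \<and> (\<forall>u v. B v u = - B u v)" using form unfolding good_form_def by (elim conjE) assumption
  have tp: "\<And>v X. trace (phi B v ** X) = B (X *v v) v" using trace_phi[OF add hom] by blast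
  have P: "\<And>k v. ((*v) A ^^ k) v = mpow A k *v v" by (simp add: mpow_vec)
  have sign: "\<And>k u v. B (mpow A k *v u) v = (-1)^k * B u (mpow A k *v v)"
    using mpow_sign[OF A] by blast
  have oddB: "B (mpow A k *v v) v = 0" if "v \<in> Q_set c B A" "odd k" "c \<noteq> Orth" for v k
  proof -
    have M: "phi B v \<in> comm_set B A" using that by (simp add: Q_set_def)
    have "trace (phi B v ** mpow A k) = 0" by (rule comm_trace[OF M mpow_comm])
    then show ?thesis using tp by simp
  qed
  have orth_pos: "B (mpow A k *v v) v = 0"
    if c: "c = Orth" and Q: "v \<in> Q_set c B A" and k: "k \<ge> 1" for v k
  proof -
    have sym: "\<forall>u w. B w u = B u w" using cls unfolding c form_class.case by (elim conjE) assumption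
    have M: "A ** phi B v + phi B v ** A \<in> comm_set B A" using Q c by (simp add: Q_set_def)
    show ?thesis
    proof (cases "odd k")
      case True
      have "B (mpow A k *v v) v = - B v (mpow A k *v v)" using sign[of k v v] True by simp
      also have "\<dots> = - B (mpow A k *v v) v" using sym[rule_format, of "mpow A k *v v" v] by simp
      finally have "B (mpow A k *v v) v + B (mpow A k *v v) v = 0"
        by (simp only: eq_neg_iff_add_eq_0)
      then show ?thesis using two_zero[OF char] by blast
    next
      case False
      obtain m where m0: "k = Suc m" using k by (cases k) auto
      then have m: "k = Suc m" "odd m" using False by auto
      have e: "mpow A m ** A = mpow A k" using m mpow_comm[of A m] by simp
      have "B ((mpow A m ** A) *v v) v + B ((mpow A m ** A) *v v) v = 0"
        by (rule orth_trace[OF M mpow_comm tp])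
      then have "B (mpow A k *v v) v + B (mpow A k *v v) v = 0" by (simp only: e)
      then show ?thesis by (rule two_zero[OF char])
    qed
  qed
  have orth_zero: "B v v = 0"
    if c: "c = Orth" and Q: "v \<in> Q_set c B A" and d: "det A \<noteq> 0" for v
  proof -
    have M: "A ** phi B v + phi B v ** A \<in> comm_set B A" using Q c by (simp add: Q_set_def)
    obtain X where AX: "A ** X = mat 1"
      using d invertible_det_nz invertible_right_inverse by blast
    have XA: "X ** A = mat 1" using AX matrix_left_right_inverse by blast
    have "B ((X ** A) *v v) v + B ((X ** A) *v v) v = 0"
      by (rule orth_trace[OF M _ tp]) (simp add: AX XA)
    then have "B v v + B v v = 0" by (simp add: XA)
    then show ?thesis by (rule two_zero[OF char])
  qed
  have nonorth: "Q_set c B A \<subseteq> R_set B A" if c: "c \<noteq> Orth"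
  proof
    fix v assume Q: "v \<in> Q_set c B A"
    have "B (mpow A k *v v) v = 0" for k
    proof (cases "odd k")
      case True then show ?thesis using oddB Q c by blast
    next
      case False
      show ?thesis
      proof (cases c)
        case Orth then show ?thesis using c by simp
      next
        case Symp
        have skew: "\<forall>u w. B w u = - B u w" using cls unfolding Symp form_class.case by (elim conjE) assumption
        have "B (mpow A k *v v) v = B v (mpow A k *v v)" using sign[of k v v] False by simp
        also have "\<dots> = - B (mpow A k *v v) v" using skew[rule_format, of "mpow A k *v v" v] by simp
        finally have "B (mpow A k *v v) v + B (mpow A k *v v) v = 0"
          by (simp only: eq_neg_iff_add_eq_0)
        then show ?thesis using two_zero[OF char] by blast
      next
        case Unit
        have "\<sigma> \<noteq> id" using cls unfolding Unit form_class.case by (elim conjE) assumption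
        then obtain l where l: "\<sigma> l \<noteq> l" by (auto simp: fun_eq_iff)
        have sadd: "\<And>x y. \<sigma> (x + y) = \<sigma> x + \<sigma> y" and sinv: "\<And>x. \<sigma> (\<sigma> x) = x"
          using fi unfolding field_involution_def by blast+
        have sdiff: "\<And>x y. \<sigma> (x - y) = \<sigma> x - \<sigma> y"
        proof -
          fix x y
          have "\<sigma> (x - y) + \<sigma> y = \<sigma> x" using sadd[of "x - y" y] by simp
          then show "\<sigma> (x - y) = \<sigma> x - \<sigma> y" by (simp add: eq_diff_eq)
        qed
        define \<mu> where "\<mu> = l - \<sigma> l"
        have mu0: "\<mu> \<noteq> 0" using l by (simp add: \<mu>_def)
        have smu: "\<sigma> \<mu> = - \<mu>" by (simp add: \<mu>_def sdiff sinv)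
        let ?X = "smat \<mu> (mpow A k)"
        have lie: "?X \<in> lie_alg B"
          unfolding lie_alg_def
        proof (intro CollectI allI)
          fix u w
          have "B (?X *v u) w = \<mu> * B (mpow A k *v u) w" by (simp add: smat_vec hom)
          also have "\<dots> = \<mu> * B u (mpow A k *v w)" using sign[of k u w] False by simp
          also have "\<dots> = - B u (?X *v w)" by (simp add: smat_vec hom2 smu)
          finally show "B (?X *v u) w = - B u (?X *v w)" .
        qed
        have M: "phi B v \<in> comm_set B A" using Q c by (simp add: Q_set_def)
        have "trace (phi B v ** ?X) = 0" by (rule comm_trace[OF M smat_comm[OF mpow_comm]])
        then have "\<mu> * B (mpow A k *v v) v = 0" using tp by (simp add: smat_vec hom)
        then show ?thesis using mu0 by simp
      qed
    qed
    then show "v \<in> R_set B A" by (simp add: R_set_def P)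
  qed
  show ?thesis
  proof (intro conjI impI)
    assume nx: "\<not> (c = Orth \<and> charpoly A = [:0, 1:] ^ CARD('n))"
    show "Q_set c B A \<subseteq> R_set B A"
    proof (cases "c = Orth")
      case False then show ?thesis by (rule nonorth)
    next
      case True
      then have d: "det A \<noteq> 0" using nx charpoly_x[OF irr] by blast
      show ?thesis
      proof
        fix v assume Q: "v \<in> Q_set c B A"
        have "B (mpow A k *v v) v = 0" for k
        proof (cases "k = 0")
          case True then show ?thesis using orth_zero[OF \<open>c = Orth\<close> Q d] by simp
        next
          case False then show ?thesis using orth_pos[OF \<open>c = Orth\<close> Q] by simp
        qed
        then show "v \<in> R_set B A" by (simp add: R_set_def P)
      qed
    qed
  next
    assume "c = Orth \<and> charpoly A = [:0, 1:] ^ CARD('n)"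
    then show "\<forall>v\<in>Q_set c B A. \<forall>k::nat. k \<ge> 1 \<longrightarrow> B (((*v) A ^^ k) v) v = 0"
      using orth_pos by (simp add: P)
  qed
qed

end
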